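(* Let $\Gamma\subseteq\mathrm{Aff}(\mathbb{R}^n)$ be an $n$-dimensional crystallographic group whose subgroup of pure translations is exactly $\mathbb{Z}^n$, with holonomy group $F$, and let $D\in N_{\mathrm{GL}_n(\mathbb{Z})}(F)$. Then the set $\{R(\varphi)\mid\varphi\in\mathrm{Aut}(\Gamma)\text{ with }\varphi|_{\mathbb{Z}^n}=D\}$ is finite.
   Context: $\mathrm{Aff}(\mathbb{R}^n)=\mathbb{R}^n\rtimes\mathrm{GL}_n(\mathbb{R})$ with multiplication $(d_1,D_1)(d_2,D_2)=(d_1+D_1d_2,D_1D_2)$. An $n$-dimensional crystallographic group is a discrete cocompact subgroup of $\mathbb{R}^n\rtimes O(n)$; here it is realised inside $\mathrm{Aff}(\mathbb{R}^n)$ such that $\Gamma\cap\mathbb{R}^n=\{(z,I_n)\mid z\in\mathbb{Z}^n\}$, identified with $\mathbb{Z}^n$. The holonomy group is $F=\{A\mid\exists a:\ (a,A)\in\Gamma\}\subseteq\mathrm{GL}_n(\mathbb{Z})$ (finite), and $N_{\mathrm{GL}_n(\mathbb{Z})}(F)$ is its normaliser in $\mathrm{GL}_n(\mathbb{Z})$. Every automorphism $\varphi$ of $\Gamma$ restricts to an automorphism of $\mathbb{Z}^n$, i.e. a matrix in $\mathrm{GL}_n(\mathbb{Z})$. For an automorphism $\varphi$, $R(\varphi)\in\{1,2,\dots\}\cup\{\infty\}$ is the number of classes of the equivalence relation $g\sim g'\iff\exists h\in\Gamma: g=hg'\varphi(h)^{-1}$ (Reidemeister number). *)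

theory Defs
  imports "HOL-Analysis.Analysis" "HOL-Library.Extended_Nat"
begin

text \<open>Elements of Aff(R^n) are pairs (d, D) with D invertible; the dimension n
  is the cardinality of the finite index type 'n.\<close>

type_synonym 'n aff = "(real^'n) \<times> (real^'n^'n)"

definition Aff :: "'n::finite aff set" where
  "Aff = {(d, D). invertible D}"

definition aff_mult :: "'n::finite aff \<Rightarrow> 'n aff \<Rightarrow> 'n aff" where
  "aff_mult g h = (fst g + snd g *v fst h, snd g ** snd h)"

definition aff_one :: "'n::finite aff" where
  "aff_one = (0, mat 1)"

definition aff_inv :: "'n::finite aff \<Rightarrow> 'n aff" where
  "aff_inv g = (- (matrix_inv (snd g) *v fst g), matrix_inv (snd g))"

definition aff_act :: "'n::finite aff \<Rightarrow> real^'n \<Rightarrow> real^'n" where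
  "aff_act g x = fst g + snd g *v x"

definition aff_subgroup :: "'n::finite aff set \<Rightarrow> bool" where
  "aff_subgroup G \<longleftrightarrow> G \<subseteq> Aff \<and> aff_one \<in> G \<and>
     (\<forall>g\<in>G. \<forall>h\<in>G. aff_mult g h \<in> G) \<and> (\<forall>g\<in>G. aff_inv g \<in> G)"

definition Isom :: "'n::finite aff set" where
  "Isom = {(d, A). orthogonal_matrix A}"

definition discrete_set :: "'n::finite aff set \<Rightarrow> bool" where
  "discrete_set G \<longleftrightarrow> (\<forall>x\<in>G. \<exists>e>0. \<forall>y\<in>G. dist y x < e \<longrightarrow> y = x)"

definition cocompact :: "'n::finite aff set \<Rightarrow> bool" where
  "cocompact G \<longleftrightarrow> (\<exists>K. compact K \<and> (\<Union>g\<in>G. aff_act g ` K) = UNIV)"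

definition crystallographic :: "'n::finite aff set \<Rightarrow> bool" where
  "crystallographic \<Gamma> \<longleftrightarrow> aff_subgroup \<Gamma> \<and>
     (\<exists>c\<in>Aff. let \<Gamma>' = (\<lambda>g. aff_mult (aff_mult c g) (aff_inv c)) ` \<Gamma> in
        \<Gamma>' \<subseteq> Isom \<and> discrete_set \<Gamma>' \<and> cocompact \<Gamma>')"

definition int_vec :: "real^'n \<Rightarrow> bool" where
  "int_vec z \<longleftrightarrow> (\<forall>i. z $ i \<in> \<int>)"

definition int_mat :: "real^'n^'n \<Rightarrow> bool" where
  "int_mat A \<longleftrightarrow> (\<forall>i j. A $ i $ j \<in> \<int>)"

definition lattice_transl :: "'n::finite aff set" where
  "lattice_transl = {(z, mat 1) | z. int_vec z}"

definition holonomy :: "'n::finite aff set \<Rightarrow> (real^'n^'n) set" where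
  "holonomy \<Gamma> = snd ` \<Gamma>"

definition GLZ :: "(real^'n::finite^'n) set" where
  "GLZ = {A. invertible A \<and> int_mat A \<and> int_mat (matrix_inv A)}"

definition normaliser_GLZ :: "(real^'n::finite^'n) set \<Rightarrow> (real^'n^'n) set" where
  "normaliser_GLZ F = {D \<in> GLZ. (\<lambda>A. D ** A ** matrix_inv D) ` F = F}"

definition aut :: "'n::finite aff set \<Rightarrow> ('n aff \<Rightarrow> 'n aff) set" where
  "aut \<Gamma> = {\<phi>. bij_betw \<phi> \<Gamma> \<Gamma> \<and> (\<forall>g\<in>\<Gamma>. \<forall>h\<in>\<Gamma>. \<phi> (aff_mult g h) = aff_mult (\<phi> g) (\<phi> h))}"

definition twisted_rel :: "'n::finite aff set \<Rightarrow> ('n aff \<Rightarrow> 'n aff) \<Rightarrow> ('n aff \<times> 'n aff) set" where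
  "twisted_rel \<Gamma> \<phi> = {(g, g'). g \<in> \<Gamma> \<and> g' \<in> \<Gamma> \<and>
      (\<exists>h\<in>\<Gamma>. g = aff_mult (aff_mult h g') (aff_inv (\<phi> h)))}"

definition reidemeister :: "'n::finite aff set \<Rightarrow> ('n aff \<Rightarrow> 'n aff) \<Rightarrow> enat" where
  "reidemeister \<Gamma> \<phi> =
     (if finite (\<Gamma> // twisted_rel \<Gamma> \<phi>) then enat (card (\<Gamma> // twisted_rel \<Gamma> \<phi>)) else \<infinity>)"

end

theory Submission
  imports Defs
begin


lemma minv: fixes A :: "real^'n::finite^'n" assumes "invertible A"
  shows "A ** matrix_inv A = mat 1" "matrix_inv A ** A = mat 1"
proof -
  have "\<exists>A'. A ** A' = mat 1 \<and> A' ** A = mat 1" using assms invertible_def by blast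
  then have "A ** matrix_inv A = mat 1 \<and> matrix_inv A ** A = mat 1"
    unfolding matrix_inv_def by (rule someI_ex)
  then show "A ** matrix_inv A = mat 1" "matrix_inv A ** A = mat 1" by auto
qed

lemma minv_unique: fixes A X :: "real^'n::finite^'n" assumes "invertible A" "A ** X = mat 1"
  shows "X = matrix_inv A"
proof -
  have "X = (matrix_inv A ** A) ** X" using minv(2)[OF assms(1)] by simp
  also have "\<dots> = matrix_inv A" by (metis assms(2) matrix_mul_assoc matrix_mul_rid)
  finally show ?thesis .
qed

lemma minv_invertible: fixes A :: "real^'n::finite^'n" assumes "invertible A"
  shows "invertible (matrix_inv A)"
  using minv[OF assms] invertible_def by blast

lemma minv_mult: fixes A B :: "real^'n::finite^'n" assumes "invertible A" "invertible B"
  shows "matrix_inv (A ** B) = matrix_inv B ** matrix_inv A" "invertible (A ** B)"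
proof -
  have e: "(A ** B) ** (matrix_inv B ** matrix_inv A) = mat 1"
    by (metis assms minv(1) matrix_mul_assoc matrix_mul_rid)
  then show "invertible (A ** B)" using matrix_left_right_inverse invertible_def by blast
  then show "matrix_inv (A ** B) = matrix_inv B ** matrix_inv A" using minv_unique e by metis
qed

lemma minv_minv: fixes A :: "real^'n::finite^'n" assumes "invertible A"
  shows "matrix_inv (matrix_inv A) = A"
  using minv_unique[OF minv_invertible[OF assms] minv(2)[OF assms]] by simp

lemma minv_one: "matrix_inv (mat 1 :: real^'n::finite^'n) = mat 1"
  using minv_unique[of "mat 1" "mat 1"] invertible_def by (metis matrix_mul_lid)

lemma mvneg: fixes A :: "real^'n::finite^'m" shows "A *v (- x) = - (A *v x)"
  by (simp add: matrix_vector_mult_def vec_eq_iff sum_negf)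

lemma aff_assoc: "aff_mult (aff_mult a b) c = aff_mult a (aff_mult b c)"
  unfolding aff_mult_def
  by (simp add: matrix_mul_assoc matrix_vector_mul_assoc[symmetric] matrix_vector_right_distrib add.assoc)

lemma aff_one_l[simp]: "aff_mult aff_one g = g" and aff_one_r[simp]: "aff_mult g aff_one = g"
  unfolding aff_mult_def aff_one_def by auto

lemma aff_inv_r: assumes "invertible (snd g)" shows "aff_mult g (aff_inv g) = aff_one"
  using minv[OF assms] unfolding aff_mult_def aff_inv_def aff_one_def
  by (simp add: matrix_vector_mul_assoc mvneg)

lemma aff_inv_l: assumes "invertible (snd g)" shows "aff_mult (aff_inv g) g = aff_one"
  using minv[OF assms] unfolding aff_mult_def aff_inv_def aff_one_def
  by (simp add: matrix_vector_mul_assoc)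

lemma aff_inv_mult: assumes "invertible (snd a)" "invertible (snd b)"
  shows "aff_inv (aff_mult a b) = aff_mult (aff_inv b) (aff_inv a)"
proof -
  have "matrix_inv (snd a) *v (snd a *v fst b) = fst b"
    using minv[OF assms(1)] by (simp add: matrix_vector_mul_assoc)
  then show ?thesis
  using minv_mult[OF assms] unfolding aff_mult_def aff_inv_def
  by (simp add: matrix_vector_mul_assoc[symmetric] matrix_vector_right_distrib mvneg)
qed

lemma aff_inv_inv: assumes "invertible (snd a)" shows "aff_inv (aff_inv a) = a"
  using minv_minv[OF assms] minv[OF assms] unfolding aff_inv_def
  by (simp add: matrix_vector_mul_assoc mvneg prod_eq_iff)



lemma quot_bij:
  assumes bij: "bij_betw f A A" and r1: "r1 \<subseteq> A \<times> A" and r2: "r2 \<subseteq> A \<times> A"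
    and eq: "\<And>x y. x \<in> A \<Longrightarrow> y \<in> A \<Longrightarrow> (x, y) \<in> r1 \<longleftrightarrow> (f x, f y) \<in> r2"
  shows "finite (A // r1) = finite (A // r2) \<and> card (A // r1) = card (A // r2)"
proof -
  have cls: "f ` (r1 `` {x}) = r2 `` {f x}" if "x \<in> A" for x
  proof
    show "f ` (r1 `` {x}) \<subseteq> r2 `` {f x}" using eq that r1 by auto
    show "r2 `` {f x} \<subseteq> f ` (r1 `` {x})"
    proof
      fix z assume "z \<in> r2 `` {f x}"
      then have z: "(f x, z) \<in> r2" "z \<in> A" using r2 by auto
      then obtain y where y: "y \<in> A" "z = f y" using bij bij_betw_def by (metis imageE)
      then have "(x, y) \<in> r1" using eq that z by auto
      then show "z \<in> f ` (r1 `` {x})" using y by auto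
    qed
  qed
  have img: "image f ` (A // r1) = A // r2"
  proof -
    have "image f ` (A // r1) = (\<lambda>x. r2 `` {f x}) ` A"
      unfolding quotient_def using cls by (auto simp: image_iff)
    also have "\<dots> = (\<lambda>y. r2 `` {y}) ` (f ` A)" by auto
    also have "\<dots> = A // r2" using bij unfolding bij_betw_def quotient_def by auto
    finally show ?thesis .
  qed
  have "A // r1 \<subseteq> Pow A" using r1 unfolding quotient_def by auto
  then have "inj_on (image f) (A // r1)"
    using inj_on_image_Pow bij bij_betw_def inj_on_subset by metis
  then have "bij_betw (image f) (A // r1) (A // r2)" using img bij_betw_def by blast
  then show ?thesis using bij_betw_finite bij_betw_same_card by blast
qed

lemma reid_eqI:
  assumes "bij_betw f \<Gamma> \<Gamma>"
    and "\<And>x y. x \<in> \<Gamma> \<Longrightarrow> y \<in> \<Gamma> \<Longrightarrow> (x, y) \<in> twisted_rel \<Gamma> \<phi> \<longleftrightarrow> (f x, f y) \<in> twisted_rel \<Gamma> \<psi>"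
  shows "reidemeister \<Gamma> \<phi> = reidemeister \<Gamma> \<psi>"
proof -
  have "twisted_rel \<Gamma> \<phi> \<subseteq> \<Gamma> \<times> \<Gamma>" "twisted_rel \<Gamma> \<psi> \<subseteq> \<Gamma> \<times> \<Gamma>"
    unfolding twisted_rel_def by auto
  from quot_bij[OF assms(1) this assms(2)] show ?thesis
    unfolding reidemeister_def by simp
qed

lemma reid_agree:
  assumes "\<And>h. h \<in> \<Gamma> \<Longrightarrow> \<phi> h = \<psi> h"
  shows "reidemeister \<Gamma> \<phi> = reidemeister \<Gamma> \<psi>"
proof -
  have "twisted_rel \<Gamma> \<phi> = twisted_rel \<Gamma> \<psi>" unfolding twisted_rel_def using assms by auto
  then show ?thesis unfolding reidemeister_def by simp
qed

lemma sub_inv: "aff_subgroup G \<Longrightarrow> g \<in> G \<Longrightarrow> invertible (snd g)"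
  unfolding aff_subgroup_def Aff_def by auto

lemma cancel_r: assumes "invertible (snd w)"
  shows "(x = aff_mult y (aff_inv w)) \<longleftrightarrow> (aff_mult x w = y)"
  by (metis aff_assoc aff_inv_l aff_inv_r aff_one_r assms)

lemma reid_conj:
  assumes sub: "aff_subgroup \<Gamma>" and w: "w \<in> \<Gamma>" and ph: "\<And>h. h \<in> \<Gamma> \<Longrightarrow> \<phi> h \<in> \<Gamma>"
    and ps: "\<And>h. h \<in> \<Gamma> \<Longrightarrow> \<psi> h = aff_mult (aff_mult w (\<phi> h)) (aff_inv w)"
  shows "reidemeister \<Gamma> \<psi> = reidemeister \<Gamma> \<phi>"
proof (rule reid_eqI[where f = "\<lambda>g. aff_mult g w"])
  have iw: "aff_inv w \<in> \<Gamma>" and cl: "\<And>a b. a \<in> \<Gamma> \<Longrightarrow> b \<in> \<Gamma> \<Longrightarrow> aff_mult a b \<in> \<Gamma>"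
    using sub w unfolding aff_subgroup_def by auto
  have invw: "invertible (snd w)" using sub_inv[OF sub w] .
  show "bij_betw (\<lambda>g. aff_mult g w) \<Gamma> \<Gamma>"
    apply (rule bij_betw_byWitness[where f' = "\<lambda>g. aff_mult g (aff_inv w)"])
    using invw iw w cl
       apply (simp_all add: aff_assoc aff_inv_l aff_inv_r image_subset_iff)
    done
  fix x y assume x: "x \<in> \<Gamma>" and y: "y \<in> \<Gamma>"
  have key: "(x = aff_mult (aff_mult k y) (aff_inv (\<psi> k))) \<longleftrightarrow>
     (aff_mult x w = aff_mult (aff_mult k (aff_mult y w)) (aff_inv (\<phi> k)))" if k: "k \<in> \<Gamma>" for k
  proof -
    have p: "\<phi> k \<in> \<Gamma>" using ph k .
    have ip: "invertible (snd (\<phi> k))" using sub_inv[OF sub p] .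
    have wp: "invertible (snd (aff_mult w (\<phi> k)))" using sub_inv[OF sub cl[OF w p]] .
    have iiw: "invertible (snd (aff_inv w))" using sub_inv[OF sub iw] .
    have "aff_inv (\<psi> k) = aff_mult w (aff_mult (aff_inv (\<phi> k)) (aff_inv w))"
      unfolding ps[OF k] aff_inv_mult[OF wp iiw] aff_inv_inv[OF invw] aff_inv_mult[OF invw ip]
      by (simp add: aff_assoc)
    then have e: "aff_mult (aff_mult k y) (aff_inv (\<psi> k)) =
       aff_mult (aff_mult (aff_mult k (aff_mult y w)) (aff_inv (\<phi> k))) (aff_inv w)"
      by (simp add: aff_assoc)
    show ?thesis unfolding e by (rule cancel_r[OF invw])
  qed
  show "(x, y) \<in> twisted_rel \<Gamma> \<psi> \<longleftrightarrow> (aff_mult x w, aff_mult y w) \<in> twisted_rel \<Gamma> \<phi>"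
    unfolding twisted_rel_def using x y key cl[OF x w] cl[OF y w] by auto
qed

lemma finite_vecs: assumes "finite T" shows "finite {v :: 'a^'n::finite. \<forall>i. v $ i \<in> T}"
proof -
  have "{v :: 'a^'n. \<forall>i. v $ i \<in> T} \<subseteq> (\<lambda>f. \<chi> i. f i) ` (PiE UNIV (\<lambda>_. T))"
  proof
    fix v :: "'a^'n" assume "v \<in> {v. \<forall>i. v $ i \<in> T}"
    then have "(\<lambda>i. v $ i) \<in> PiE UNIV (\<lambda>_. T)" by auto
    then show "v \<in> (\<lambda>f. \<chi> i. f i) ` (PiE UNIV (\<lambda>_. T))" by (rule rev_image_eqI) simp
  qed
  moreover have "finite (PiE (UNIV::'n set) (\<lambda>_. T))" using assms by (simp add: finite_PiE)
  ultimately show ?thesis using finite_subset by blast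
qed

lemma finite_mats: assumes "finite T" shows "finite {M :: 'a^'n::finite^'m::finite. \<forall>i j. M $ i $ j \<in> T}"
proof -
  have "{M :: 'a^'n^'m. \<forall>i j. M $ i $ j \<in> T} = {M. \<forall>i. M $ i \<in> {v. \<forall>j. v $ j \<in> T}}" by auto
  then show ?thesis using finite_vecs[OF finite_vecs[OF assms]] by simp
qed



lemma int_vec_add: "int_vec a \<Longrightarrow> int_vec b \<Longrightarrow> int_vec (a + b)"
  unfolding int_vec_def by auto
lemma int_vec_diff: "int_vec a \<Longrightarrow> int_vec b \<Longrightarrow> int_vec (a - b)"
  unfolding int_vec_def by auto
lemma int_vec_neg: "int_vec a \<Longrightarrow> int_vec (- a)"
  unfolding int_vec_def by auto
lemma int_vec_sum: "(\<And>x. x \<in> X \<Longrightarrow> int_vec (f x)) \<Longrightarrow> int_vec (sum f X)"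
  unfolding int_vec_def by (auto intro: Ints_sum)
lemma int_vec_axis: "int_vec (axis j (1::real))"
  unfolding int_vec_def axis_def by auto

lemma aff_div: assumes "snd x = snd y" "invertible (snd y)"
  shows "aff_mult x (aff_inv y) = (fst x - fst y, mat 1)"
  using assms minv[OF assms(2)] unfolding aff_mult_def aff_inv_def
  by (simp add: matrix_vector_mul_assoc mvneg)

lemma cols_eq: fixes M N :: "real^'n::finite^'m::finite"
  assumes "\<And>j. M *v axis j 1 = N *v axis j 1" shows "M = N"
proof -
  have "\<And>j. column j M = column j N" using assms by (simp add: matrix_vector_mult_basis)
  then show ?thesis by (simp add: vec_eq_iff column_def)
qed

locale cg =
  fixes \<Gamma> :: "'n::finite aff set" and D :: "real^'n^'n"
  assumes sub: "aff_subgroup \<Gamma>"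
    and lat: "{g \<in> \<Gamma>. snd g = mat 1} = lattice_transl"
    and Dinv: "invertible D"
begin

definition SD where "SD = {\<phi>. \<phi> \<in> aut \<Gamma> \<and> (\<forall>z. int_vec z \<longrightarrow> \<phi> (z, mat 1) = (D *v z, mat 1))}"

lemma mem_lat: "(z, mat 1) \<in> \<Gamma> \<longleftrightarrow> int_vec z"
proof -
  have "(z, mat 1) \<in> \<Gamma> \<longleftrightarrow> (z, mat 1) \<in> {g \<in> \<Gamma>. snd g = mat 1}" by simp
  also have "\<dots> \<longleftrightarrow> (z, mat 1) \<in> lattice_transl" using lat by simp
  also have "\<dots> \<longleftrightarrow> int_vec z" unfolding lattice_transl_def by simp
  finally show ?thesis .
qed

lemma cl: "a \<in> \<Gamma> \<Longrightarrow> b \<in> \<Gamma> \<Longrightarrow> aff_mult a b \<in> \<Gamma>"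
  and cli: "a \<in> \<Gamma> \<Longrightarrow> aff_inv a \<in> \<Gamma>" and one: "aff_one \<in> \<Gamma>"
  using sub unfolding aff_subgroup_def by auto

lemma inv: "g \<in> \<Gamma> \<Longrightarrow> invertible (snd g)" using sub_inv[OF sub] .

lemma conjlat: "aff_mult g (z, mat 1) = aff_mult (snd g *v z, mat 1) g"
  unfolding aff_mult_def by (simp add: add.commute)

lemma intA: assumes g: "g \<in> \<Gamma>" and z: "int_vec z" shows "int_vec (snd g *v z)"
proof -
  have "(snd g *v z, mat 1) = aff_mult (aff_mult g (z, mat 1)) (aff_inv g)"
    using cancel_r[OF inv[OF g], of "(snd g *v z, mat 1)" "aff_mult g (z, mat 1)"] conjlat[of g z]
    by simp
  moreover have "aff_mult (aff_mult g (z, mat 1)) (aff_inv g) \<in> \<Gamma>"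
    using g cl cli z mem_lat by simp
  ultimately have "(snd g *v z, mat 1) \<in> \<Gamma>" by (simp only:)
  then show ?thesis using mem_lat by simp
qed

lemma SD_mem: assumes "\<phi> \<in> SD" "h \<in> \<Gamma>" shows "\<phi> h \<in> \<Gamma>"
proof -
  have "bij_betw \<phi> \<Gamma> \<Gamma>" using assms(1) unfolding SD_def aut_def by simp
  then show ?thesis using assms(2) by (rule bij_betw_apply)
qed

lemma SD_hom: "\<phi> \<in> SD \<Longrightarrow> g \<in> \<Gamma> \<Longrightarrow> h \<in> \<Gamma> \<Longrightarrow> \<phi> (aff_mult g h) = aff_mult (\<phi> g) (\<phi> h)"
  unfolding SD_def aut_def by blast

lemma SD_lat: "\<phi> \<in> SD \<Longrightarrow> int_vec z \<Longrightarrow> \<phi> (z, mat 1) = (D *v z, mat 1)"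
  unfolding SD_def by blast

lemma BD: assumes p: "\<phi> \<in> SD" and g: "g \<in> \<Gamma>" shows "snd (\<phi> g) ** D = D ** snd g"
proof (rule cols_eq)
  fix j
  define z :: "real^'n" where "z = axis j 1"
  have z: "int_vec z" unfolding z_def by (rule int_vec_axis)
  have Az: "int_vec (snd g *v z)" using intA[OF g z] .
  have zG: "(z, mat 1) \<in> \<Gamma>" and AzG: "(snd g *v z, mat 1) \<in> \<Gamma>" using z Az mem_lat by auto
  have "\<phi> (aff_mult g (z, mat 1)) = \<phi> (aff_mult (snd g *v z, mat 1) g)" using conjlat[of g z] by simp
  then have "aff_mult (\<phi> g) (\<phi> (z, mat 1)) = aff_mult (\<phi> (snd g *v z, mat 1)) (\<phi> g)"
    using SD_hom[OF p g zG] SD_hom[OF p AzG g] by simp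
  then have "aff_mult (\<phi> g) (D *v z, mat 1) = aff_mult (D *v (snd g *v z), mat 1) (\<phi> g)"
    using SD_lat[OF p z] SD_lat[OF p Az] by simp
  then have "fst (\<phi> g) + snd (\<phi> g) *v (D *v z) = D *v (snd g *v z) + fst (\<phi> g)"
    unfolding aff_mult_def by (simp add: prod_eq_iff)
  then show "(snd (\<phi> g) ** D) *v axis j 1 = (D ** snd g) *v axis j 1"
    unfolding z_def by (simp add: matrix_vector_mul_assoc add.commute)
qed

lemma snd_eq: assumes "\<phi> \<in> SD" "\<phi>' \<in> SD" "g \<in> \<Gamma>" "g' \<in> \<Gamma>" "snd g = snd g'"
  shows "snd (\<phi> g) = snd (\<phi>' g')"
proof -
  have "snd (\<phi> g) ** D = snd (\<phi>' g') ** D" using BD[OF assms(1,3)] BD[OF assms(2,4)] assms(5) by simp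
  then have "(snd (\<phi> g) ** D) ** matrix_inv D = (snd (\<phi>' g') ** D) ** matrix_inv D" by simp
  then show ?thesis using minv[OF Dinv] by (simp add: matrix_mul_assoc[symmetric])
qed

lemma diff_int: assumes "\<phi> \<in> SD" "\<phi>' \<in> SD" "g \<in> \<Gamma>"
  shows "int_vec (fst (\<phi> g) - fst (\<phi>' g))"
proof -
  have "aff_mult (\<phi> g) (aff_inv (\<phi>' g)) = (fst (\<phi> g) - fst (\<phi>' g), mat 1)"
    using aff_div[OF snd_eq[OF assms assms(3)] inv[OF SD_mem[OF assms(2,3)]]] by simp
  moreover have "aff_mult (\<phi> g) (aff_inv (\<phi>' g)) \<in> \<Gamma>"
    using SD_mem[OF assms(1,3)] SD_mem[OF assms(2,3)] cl cli by blast
  ultimately show ?thesis using mem_lat by simp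
qed

lemma welldef: assumes p: "\<phi> \<in> SD" and p': "\<phi>' \<in> SD" and g: "g \<in> \<Gamma>" and g': "g' \<in> \<Gamma>"
  and s: "snd g = snd g'"
  shows "fst (\<phi> g) - fst (\<phi>' g) = fst (\<phi> g') - fst (\<phi>' g')"
proof -
  define t where "t = (fst g' - fst g, mat 1 :: real^'n^'n)"
  have "aff_mult g' (aff_inv g) = t" unfolding t_def using aff_div[OF s[symmetric] inv[OF g]] by simp
  then have tG: "t \<in> \<Gamma>" using cl cli g g' by blast
  then have ti: "int_vec (fst g' - fst g)" using mem_lat t_def by simp
  have gt: "g' = aff_mult t g" unfolding t_def aff_mult_def using s by (simp add: prod_eq_iff)
  have e: "\<psi> g' = aff_mult (D *v (fst g' - fst g), mat 1) (\<psi> g)" if "\<psi> \<in> SD" for \<psi>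
    using gt SD_hom[OF that tG g] SD_lat[OF that ti] t_def by simp
  show ?thesis using e[OF p] e[OF p'] unfolding aff_mult_def by simp
qed

lemma cocycle: assumes p: "\<phi> \<in> SD" and p': "\<phi>' \<in> SD" and g: "g \<in> \<Gamma>" and h: "h \<in> \<Gamma>"
  shows "fst (\<phi> (aff_mult g h)) - fst (\<phi>' (aff_mult g h)) =
     (fst (\<phi> g) - fst (\<phi>' g)) + snd (\<phi>' g) *v (fst (\<phi> h) - fst (\<phi>' h))"
proof -
  have "snd (\<phi> g) = snd (\<phi>' g)" using snd_eq[OF p p' g g] by simp
  then show ?thesis using SD_hom[OF p g h] SD_hom[OF p' g h] unfolding aff_mult_def
    by (simp add: algebra_simps)
qed

end


locale cg2 = cg \<Gamma> D for \<Gamma> :: "'n::finite aff set" and D +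
  fixes \<phi>0 assumes finF: "finite (holonomy \<Gamma>)" and p0: "\<phi>0 \<in> SD"
begin

definition "F = holonomy \<Gamma>"
definition "rep A = (SOME g. g \<in> \<Gamma> \<and> snd g = A)"
definition "Cf \<phi> A = fst (\<phi> (rep A)) - fst (\<phi>0 (rep A))"
definition "MB A = snd (\<phi>0 (rep A))"
definition "m = card F"
definition "\<Psi> r = (\<lambda>g. (fst (\<phi>0 g) + inverse (real m) *\<^sub>R (r - snd (\<phi>0 g) *v r), snd (\<phi>0 g)))"
definition "R0 = {r :: real^'n. \<forall>i. r $ i \<in> of_int ` {0..int m - 1}}"

lemma finF': "finite F" using finF F_def by simp

lemma rep: assumes "A \<in> F" shows "rep A \<in> \<Gamma>" "snd (rep A) = A"
proof -
  have "\<exists>g. g \<in> \<Gamma> \<and> snd g = A" using assms unfolding F_def holonomy_def by auto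
  then have "rep A \<in> \<Gamma> \<and> snd (rep A) = A" unfolding rep_def by (rule someI_ex)
  then show "rep A \<in> \<Gamma>" "snd (rep A) = A" by auto
qed

lemma inF: "g \<in> \<Gamma> \<Longrightarrow> snd g \<in> F" unfolding F_def holonomy_def by auto

lemma Cf_g: assumes p: "\<phi> \<in> SD" and g: "g \<in> \<Gamma>" shows "Cf \<phi> (snd g) = fst (\<phi> g) - fst (\<phi>0 g)"
  unfolding Cf_def using welldef[OF p p0 rep(1)[OF inF[OF g]] g rep(2)[OF inF[OF g]]] .

lemma MB_g: assumes g: "g \<in> \<Gamma>" shows "MB (snd g) = snd (\<phi>0 g)"
  unfolding MB_def using snd_eq[OF p0 p0 rep(1)[OF inF[OF g]] g rep(2)[OF inF[OF g]]] .

lemma Cf_int: assumes p: "\<phi> \<in> SD" and A: "A \<in> F" shows "int_vec (Cf \<phi> A)"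
  unfolding Cf_def using diff_int[OF p p0 rep(1)[OF A]] .

lemma F_inv: "A \<in> F \<Longrightarrow> invertible A" using inv rep by metis

lemma F_mult: assumes "A \<in> F" "A' \<in> F" shows "A ** A' \<in> F"
proof -
  have "snd (aff_mult (rep A) (rep A')) = A ** A'" using rep assms unfolding aff_mult_def by simp
  then show ?thesis using inF cl rep assms by metis
qed

lemma cocyc: assumes p: "\<phi> \<in> SD" and A: "A \<in> F" and A': "A' \<in> F"
  shows "Cf \<phi> (A ** A') = Cf \<phi> A + MB A *v Cf \<phi> A'"
proof -
  define g where "g = rep A"
  define h where "h = rep A'"
  have g: "g \<in> \<Gamma>" "snd g = A" and h: "h \<in> \<Gamma>" "snd h = A'" using rep A A' g_def h_def by auto
  have gh: "aff_mult g h \<in> \<Gamma>" "snd (aff_mult g h) = A ** A'" using cl g h unfolding aff_mult_def by auto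
  have "Cf \<phi> (A ** A') = fst (\<phi> (aff_mult g h)) - fst (\<phi>0 (aff_mult g h))"
    using Cf_g[OF p gh(1)] gh(2) by simp
  also have "\<dots> = (fst (\<phi> g) - fst (\<phi>0 g)) + snd (\<phi>0 g) *v (fst (\<phi> h) - fst (\<phi>0 h))"
    by (rule cocycle[OF p p0 g(1) h(1)])
  also have "\<dots> = Cf \<phi> A + MB A *v Cf \<phi> A'"
    using Cf_g[OF p g(1)] Cf_g[OF p h(1)] MB_g[OF g(1)] g(2) h(2) by simp
  finally show ?thesis .
qed

lemma avg: assumes p: "\<phi> \<in> SD" and A: "A \<in> F"
  shows "real m *\<^sub>R Cf \<phi> A = sum (Cf \<phi>) F - MB A *v sum (Cf \<phi>) F"
proof -
  have inj: "inj_on (\<lambda>A'. A ** A') F"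
  proof (rule inj_onI)
    fix X Y assume "A ** X = A ** Y"
    then have "(matrix_inv A ** A) ** X = (matrix_inv A ** A) ** Y" by (simp add: matrix_mul_assoc[symmetric])
    then show "X = Y" using minv(2)[OF F_inv[OF A]] by simp
  qed
  have img: "(\<lambda>A'. A ** A') ` F = F"
    using endo_inj_surj[OF finF' _ inj] F_mult[OF A] by blast
  have "sum (Cf \<phi>) F = sum (Cf \<phi>) ((\<lambda>A'. A ** A') ` F)" using img by simp
  also have "\<dots> = sum (\<lambda>A'. Cf \<phi> (A ** A')) F" using sum.reindex[OF inj] by simp
  also have "\<dots> = sum (\<lambda>A'. Cf \<phi> A + MB A *v Cf \<phi> A') F" using cocyc[OF p A] by simp
  also have "\<dots> = real m *\<^sub>R Cf \<phi> A + sum (\<lambda>A'. MB A *v Cf \<phi> A') F"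
    by (simp add: sum.distrib m_def sum_constant_scaleR del: sum_constant)
  also have "sum (\<lambda>A'. MB A *v Cf \<phi> A') F = MB A *v sum (Cf \<phi>) F"
    using linear_sum[OF matrix_vector_mul_linear, of "MB A" "Cf \<phi>" F] by (simp add: o_def)
  finally have "sum (Cf \<phi>) F = real m *\<^sub>R Cf \<phi> A + MB A *v sum (Cf \<phi>) F" .
  then show ?thesis by (metis add_diff_cancel_right')
qed

lemma m_pos: "m > 0"
proof -
  have "mat 1 \<in> F" using inF[OF one] unfolding aff_one_def by simp
  then show ?thesis unfolding m_def using finF' card_gt_0_iff by blast
qed

lemma R0_fin: "finite R0" unfolding R0_def by (rule finite_vecs) simp

lemma of_int_floor_Ints: "(x::real) \<in> \<int> \<Longrightarrow> of_int \<lfloor>x\<rfloor> = x"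
  by (metis Ints_cases floor_of_int)

lemma main: assumes p: "\<phi> \<in> SD" shows "\<exists>r\<in>R0. reidemeister \<Gamma> \<phi> = reidemeister \<Gamma> (\<Psi> r)"
proof -
  define S where "S = sum (Cf \<phi>) F"
  have Sint: "int_vec S" unfolding S_def by (rule int_vec_sum) (rule Cf_int[OF p])
  define s where "s i = \<lfloor>S $ i\<rfloor>" for i
  have Ss: "S $ i = of_int (s i)" for i using Sint of_int_floor_Ints unfolding int_vec_def s_def by metis
  define q :: "real^'n" where "q = (\<chi> i. of_int (s i div int m))"
  define r :: "real^'n" where "r = (\<chi> i. of_int (s i mod int m))"
  define w where "w = - q"
  have qr: "S = real m *\<^sub>R q + r"
  proof -
    have "S $ i = real m * of_int (s i div int m) + of_int (s i mod int m)" for i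
    proof -
      have "s i = int m * (s i div int m) + s i mod int m" by simp
      then have "real_of_int (s i) = real_of_int (int m * (s i div int m) + s i mod int m)" by simp
      then show ?thesis using Ss by (simp only: of_int_add of_int_mult of_int_of_nat_eq)
    qed
    then show ?thesis unfolding q_def r_def by (simp add: vec_eq_iff)
  qed
  have rR0: "r \<in> R0" unfolding R0_def r_def using m_pos
    by (auto intro!: imageI simp: pos_mod_sign pos_mod_bound)
  have rr: "r = S + real m *\<^sub>R w" using qr unfolding w_def by (simp add: algebra_simps)
  have wint: "int_vec w" unfolding w_def q_def int_vec_def by simp
  define t where "t = (w, mat 1 :: real^'n^'n)"
  have tG: "t \<in> \<Gamma>" unfolding t_def using mem_lat wint by simp
  define \<psi> where "\<psi> h = aff_mult (aff_mult t (\<phi> h)) (aff_inv t)" for h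
  have "reidemeister \<Gamma> \<psi> = reidemeister \<Gamma> \<phi>"
    unfolding \<psi>_def by (rule reid_conj[OF sub tG, where \<phi> = \<phi>]) (simp_all add: SD_mem[OF p])
  moreover have "reidemeister \<Gamma> \<psi> = reidemeister \<Gamma> (\<Psi> r)"
  proof (rule reid_agree)
    fix h assume h: "h \<in> \<Gamma>"
    define B where "B = snd (\<phi>0 h)"
    define C where "C = Cf \<phi> (snd h)"
    have B': "snd (\<phi> h) = B" unfolding B_def using snd_eq[OF p p0 h h refl] .
    have C': "fst (\<phi> h) = fst (\<phi>0 h) + C" unfolding C_def using Cf_g[OF p h] by simp
    have av: "real m *\<^sub>R C = S - B *v S"
      unfolding C_def B_def S_def MB_g[OF h, symmetric] by (rule avg[OF p inF[OF h]])
    have it: "aff_inv t = (- w, mat 1)" unfolding t_def aff_inv_def by (simp add: minv_one)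
    have ps: "\<psi> h = (w + fst (\<phi> h) - B *v w, B)"
      unfolding \<psi>_def it unfolding t_def aff_mult_def using B' by (simp add: mvneg)
    have key: "r - B *v r = real m *\<^sub>R (C + w - B *v w)"
      unfolding rr av[symmetric]
      by (simp add: matrix_vector_right_distrib matrix_vector_mult_scaleR scaleR_right_diff_distrib
          scaleR_right_distrib matrix_vector_mult_diff_distrib av algebra_simps)
    have "inverse (real m) *\<^sub>R (r - B *v r) = C + w - B *v w"
      unfolding key using m_pos by simp
    then show "\<psi> h = \<Psi> r h" unfolding ps \<Psi>_def B_def[symmetric] C' by (simp add: algebra_simps)
  qed
  ultimately show ?thesis using rR0 by metis
qed

end


lemma orth_entry: fixes Om :: "real^'n::finite^'n" assumes "orthogonal_matrix Om"
  shows "\<bar>Om $ k $ l\<bar> \<le> 1"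
proof -
  have "(Om ** transpose Om) $ k $ k = 1" using assms unfolding orthogonal_matrix_def by (simp add: mat_def)
  then have s: "(\<Sum>l\<in>UNIV. Om $ k $ l * Om $ k $ l) = 1"
    by (simp add: matrix_matrix_mult_def transpose_def)
  have "Om $ k $ l * Om $ k $ l \<le> (\<Sum>l\<in>UNIV. Om $ k $ l * Om $ k $ l)"
    by (rule member_le_sum) auto
  then have "(Om $ k $ l)^2 \<le> 1" using s by (simp add: power2_eq_square)
  then show ?thesis by (simp add: abs_square_le_1)
qed

lemma entry_bound: fixes P Om Q :: "real^'n::finite^'n"
  assumes "\<And>k l. \<bar>Om $ k $ l\<bar> \<le> 1"
  shows "\<bar>((P ** Om) ** Q) $ i $ j\<bar> \<le> (\<Sum>k\<in>UNIV. \<bar>P $ i $ k\<bar>) * (\<Sum>l\<in>UNIV. \<bar>Q $ l $ j\<bar>)"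
proof -
  have "\<bar>((P ** Om) ** Q) $ i $ j\<bar> = \<bar>\<Sum>l\<in>UNIV. (\<Sum>k\<in>UNIV. P $ i $ k * Om $ k $ l) * Q $ l $ j\<bar>"
    by (simp add: matrix_matrix_mult_def)
  also have "\<dots> \<le> (\<Sum>l\<in>UNIV. \<bar>(\<Sum>k\<in>UNIV. P $ i $ k * Om $ k $ l) * Q $ l $ j\<bar>)"
    by (rule sum_abs)
  also have "\<dots> \<le> (\<Sum>l\<in>UNIV. (\<Sum>k\<in>UNIV. \<bar>P $ i $ k\<bar>) * \<bar>Q $ l $ j\<bar>)"
  proof (rule sum_mono)
    fix l
    have "\<bar>\<Sum>k\<in>UNIV. P $ i $ k * Om $ k $ l\<bar> \<le> (\<Sum>k\<in>UNIV. \<bar>P $ i $ k * Om $ k $ l\<bar>)" by (rule sum_abs)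
    also have "\<dots> \<le> (\<Sum>k\<in>UNIV. \<bar>P $ i $ k\<bar>)"
    proof (rule sum_mono)
      fix k show "\<bar>P $ i $ k * Om $ k $ l\<bar> \<le> \<bar>P $ i $ k\<bar>"
        using assms[of k l] by (simp add: abs_mult mult_left_le)
    qed
    finally show "\<bar>(\<Sum>k\<in>UNIV. P $ i $ k * Om $ k $ l) * Q $ l $ j\<bar> \<le> (\<Sum>k\<in>UNIV. \<bar>P $ i $ k\<bar>) * \<bar>Q $ l $ j\<bar>"
      by (simp add: abs_mult mult_right_mono)
  qed
  also have "\<dots> = (\<Sum>k\<in>UNIV. \<bar>P $ i $ k\<bar>) * (\<Sum>l\<in>UNIV. \<bar>Q $ l $ j\<bar>)"
    by (simp add: sum_distrib_left)
  finally show ?thesis .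
qed

lemma finite_bounded_ints: "finite {x::real. x \<in> \<int> \<and> \<bar>x\<bar> \<le> K}"
proof -
  have "{x::real. x \<in> \<int> \<and> \<bar>x\<bar> \<le> K} \<subseteq> of_int ` {-\<lceil>K\<rceil>..\<lceil>K\<rceil>}"
  proof
    fix x assume "x \<in> {x::real. x \<in> \<int> \<and> \<bar>x\<bar> \<le> K}"
    then obtain k where k: "x = of_int k" "\<bar>of_int k\<bar> \<le> K" by (auto elim: Ints_cases)
    then have "k \<in> {-\<lceil>K\<rceil>..\<lceil>K\<rceil>}" by (auto; linarith)
    then show "x \<in> of_int ` {-\<lceil>K\<rceil>..\<lceil>K\<rceil>}" using k by auto
  qed
  then show ?thesis using finite_subset by blast
qed

context cg begin

lemma Aint: assumes g: "g \<in> \<Gamma>" shows "snd g $ i $ j \<in> \<int>"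
proof -
  have "int_vec (snd g *v axis j 1)" using intA[OF g int_vec_axis] .
  then show ?thesis by (simp add: matrix_vector_mult_basis int_vec_def column_def)
qed

lemma holF: assumes cr: "crystallographic \<Gamma>" shows "finite (holonomy \<Gamma>)"
proof -
  obtain c where c: "c \<in> Aff" and iso: "(\<lambda>g. aff_mult (aff_mult c g) (aff_inv c)) ` \<Gamma> \<subseteq> Isom"
    using cr unfolding crystallographic_def Let_def by blast
  define Cm where "Cm = snd c"
  define Ci where "Ci = matrix_inv Cm"
  have ci: "invertible Cm" using c unfolding Aff_def Cm_def by auto
  define K where "K = (\<Sum>i\<in>UNIV. \<Sum>k\<in>UNIV. \<bar>Ci $ i $ k\<bar>) * (\<Sum>j\<in>UNIV. \<Sum>l\<in>UNIV. \<bar>Cm $ l $ j\<bar>)"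
  have "holonomy \<Gamma> \<subseteq> {M. \<forall>i j. M $ i $ j \<in> {x::real. x \<in> \<int> \<and> \<bar>x\<bar> \<le> K}}"
  proof
    fix A assume "A \<in> holonomy \<Gamma>"
    then obtain g where g: "g \<in> \<Gamma>" "A = snd g" unfolding holonomy_def by auto
    define Om where "Om = (Cm ** A) ** Ci"
    have "snd (aff_mult (aff_mult c g) (aff_inv c)) = Om"
      unfolding Om_def aff_mult_def aff_inv_def Cm_def Ci_def g(2) by simp
    moreover have "aff_mult (aff_mult c g) (aff_inv c) \<in> Isom" using iso g by blast
    ultimately have oO: "orthogonal_matrix Om" unfolding Isom_def by auto
    have AO: "A = (Ci ** Om) ** Cm"
      unfolding Om_def Ci_def using minv[OF ci] by (metis matrix_mul_assoc matrix_mul_lid matrix_mul_rid)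
    show "A \<in> {M. \<forall>i j. M $ i $ j \<in> {x::real. x \<in> \<int> \<and> \<bar>x\<bar> \<le> K}}"
    proof (clarify, intro conjI)
      fix i j
      show "A $ i $ j \<in> \<int>" using Aint g by simp
      have "\<bar>A $ i $ j\<bar> \<le> (\<Sum>k\<in>UNIV. \<bar>Ci $ i $ k\<bar>) * (\<Sum>l\<in>UNIV. \<bar>Cm $ l $ j\<bar>)"
        unfolding AO by (rule entry_bound) (rule orth_entry[OF oO])
      also have "\<dots> \<le> K" unfolding K_def
        by (intro mult_mono member_le_sum) (auto intro: sum_nonneg)
      finally show "\<bar>A $ i $ j\<bar> \<le> K" .
    qed
  qed
  then show ?thesis using finite_mats[OF finite_bounded_ints] finite_subset by blast
qed

end

theorem theorem5p5:
  fixes \<Gamma> :: "'n::finite aff set" and D :: "real^'n^'n"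
  assumes "crystallographic \<Gamma>"
    and "{g \<in> \<Gamma>. snd g = mat 1} = lattice_transl"
    and "D \<in> normaliser_GLZ (holonomy \<Gamma>)"
  shows "finite {reidemeister \<Gamma> \<phi> | \<phi>. \<phi> \<in> aut \<Gamma> \<and>
                   (\<forall>z. int_vec z \<longrightarrow> \<phi> (z, mat 1) = (D *v z, mat 1))}"
proof -
  have sub: "aff_subgroup \<Gamma>" using assms(1) unfolding crystallographic_def by simp
  have Di: "invertible D" using assms(3) unfolding normaliser_GLZ_def GLZ_def by simp
  interpret cg \<Gamma> D using sub assms(2) Di by unfold_locales
  have eq: "{reidemeister \<Gamma> \<phi> | \<phi>. \<phi> \<in> aut \<Gamma> \<and>
                   (\<forall>z. int_vec z \<longrightarrow> \<phi> (z, mat 1) = (D *v z, mat 1))} = reidemeister \<Gamma> ` SD"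
    unfolding SD_def by auto
  show ?thesis
  proof (cases "SD = {}")
    case True then show ?thesis unfolding eq by simp
  next
    case False
    then obtain \<phi>0 where p0: "\<phi>0 \<in> SD" by blast
    interpret cg2 \<Gamma> D \<phi>0 using p0 holF[OF assms(1)] by unfold_locales
    have "reidemeister \<Gamma> ` SD \<subseteq> (\<lambda>r. reidemeister \<Gamma> (\<Psi> r)) ` R0"
      using main by blast
    then show ?thesis unfolding eq using R0_fin finite_subset by blast
  qed
qed


end
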